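(* Let $|\psi\rangle$ be a state on $\mathbb{C}^R\otimes(\mathbb{C}^\kappa\otimes\mathbb{C}^R)\otimes\mathbb{C}^\kappa$ (registers 1,2,3,4; $A$ = register 1, $B$ = registers 2,3, $C$ = register 4) such that $\mathrm{Tr}_A(|\psi\rangle\langle\psi|)$ is separable across $B|C$. Suppose $\mathsf{Density}$ and $\mathsf{MatchCheck}$ succeed on $|\psi\rangle$ with probability $\frac1\kappa-d_{\mathsf D}$ and $1-d_{\mathsf M}$ respectively. Then there exists a state $|\chi\rangle$ that is rigid after applying $\mathrm{CNOT}_{1,3}\mathrm{CNOT}_{2,4}$ such that $$|\langle\chi|\psi\rangle|^2\ge 1-\kappa d_{\mathsf D}-(\kappa+1)\sqrt{(\kappa+1)d_{\mathsf M}}.$$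
   Context: $\mathrm{CNOT}_{i,j}$ maps $|x\rangle_i|y\rangle_j\mapsto|x\rangle_i|y\oplus x\rangle_j$ with addition modulo the register dimension. $\mathsf{MatchCheck}$ measures all registers in the computational basis, obtaining $(v,c,w,d)$, and accepts iff $(v,c)=(w,d)$. $\mathsf{Density}$ applies $\mathrm{CNOT}_{1,3}\mathrm{CNOT}_{2,4}$ and then measures the first two registers in the Hadamard basis, accepting iff they are in the uniform superposition state; equivalently it accepts with probability $|\langle +'|\psi\rangle|^2$ where $|+'\rangle=\mathrm{CNOT}_{1,3}\mathrm{CNOT}_{2,4}\big(\tfrac{1}{\sqrt{R\kappa}}\sum_{v\in[R],c\in[\kappa]}|v\rangle|c\rangle\big)|0\rangle|0\rangle$. A state is "rigid after applying $\mathrm{CNOT}_{1,3}\mathrm{CNOT}_{2,4}$" if it has the form $\frac1{\sqrt R}\sum_{v\in[R]}|v\rangle|c_v\rangle|v\rangle|c_v\rangle$ for some indices $c_v\in[\kappa]$. *)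

theory Defs
  imports "HOL-Analysis.Analysis"
begin

text \<open>A vector in C^R (x) C^kappa (x) C^R (x) C^kappa is represented by its amplitude
  function psi v c w d, where only indices v < R, c < kappa, w < R, d < kappa matter.\<close>

type_synonym state4 = "nat \<Rightarrow> nat \<Rightarrow> nat \<Rightarrow> nat \<Rightarrow> complex"

definition inner4 :: "nat \<Rightarrow> nat \<Rightarrow> state4 \<Rightarrow> state4 \<Rightarrow> complex" where
  "inner4 R \<kappa> \<phi> \<psi> =
     (\<Sum>v<R. \<Sum>c<\<kappa>. \<Sum>w<R. \<Sum>d<\<kappa>. cnj (\<phi> v c w d) * \<psi> v c w d)"

definition is_state4 :: "nat \<Rightarrow> nat \<Rightarrow> state4 \<Rightarrow> bool" where
  "is_state4 R \<kappa> \<psi> \<longleftrightarrow> inner4 R \<kappa> \<psi> \<psi> = 1"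

text \<open>CNOT_{1,3}: |x>_1|y>_3 -> |x>_1|y+x mod R>_3;
  CNOT_{2,4}: |x>_2|y>_4 -> |x>_2|y+x mod kappa>_4 (as action on amplitudes).\<close>

definition CNOT13 :: "nat \<Rightarrow> state4 \<Rightarrow> state4" where
  "CNOT13 R \<psi> = (\<lambda>v c w d. \<psi> v c ((w + R - v mod R) mod R) d)"

definition CNOT24 :: "nat \<Rightarrow> state4 \<Rightarrow> state4" where
  "CNOT24 \<kappa> \<psi> = (\<lambda>v c w d. \<psi> v c w ((d + \<kappa> - c mod \<kappa>) mod \<kappa>))"

definition unif00 :: "nat \<Rightarrow> nat \<Rightarrow> state4" where
  "unif00 R \<kappa> = (\<lambda>v c w d. if w = 0 \<and> d = 0 then complex_of_real (1 / sqrt (real (R * \<kappa>))) else 0)"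

definition plus' :: "nat \<Rightarrow> nat \<Rightarrow> state4" where
  "plus' R \<kappa> = CNOT13 R (CNOT24 \<kappa> (unif00 R \<kappa>))"

definition density_accept :: "nat \<Rightarrow> nat \<Rightarrow> state4 \<Rightarrow> real" where
  "density_accept R \<kappa> \<psi> = (cmod (inner4 R \<kappa> (plus' R \<kappa>) \<psi>))\<^sup>2"

text \<open>MatchCheck: measure all registers obtaining (v,c,w,d), accept iff (v,c) = (w,d).\<close>
definition matchcheck_accept :: "nat \<Rightarrow> nat \<Rightarrow> state4 \<Rightarrow> real" where
  "matchcheck_accept R \<kappa> \<psi> =
     (\<Sum>v<R. \<Sum>c<\<kappa>. \<Sum>w<R. \<Sum>d<\<kappa>. if (v, c) = (w, d) then (cmod (\<psi> v c w d))\<^sup>2 else 0)"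

definition rigid_after_CNOT :: "nat \<Rightarrow> nat \<Rightarrow> state4 \<Rightarrow> bool" where
  "rigid_after_CNOT R \<kappa> chi \<longleftrightarrow>
     (\<exists>cv :: nat \<Rightarrow> nat. (\<forall>v<R. cv v < \<kappa>) \<and>
        (\<forall>v<R. \<forall>c<\<kappa>. \<forall>w<R. \<forall>d<\<kappa>.
           chi v c w d = (if w = v \<and> c = cv v \<and> d = cv v
                         then complex_of_real (1 / sqrt (real R)) else 0)))"

definition density_matrix :: "'i set \<Rightarrow> ('i \<Rightarrow> 'i \<Rightarrow> complex) \<Rightarrow> bool" where
  "density_matrix S \<rho> \<longleftrightarrow>
     (\<forall>i\<in>S. \<forall>j\<in>S. \<rho> j i = cnj (\<rho> i j)) \<and>
     (\<forall>x :: 'i \<Rightarrow> complex. 0 \<le> Re (\<Sum>i\<in>S. \<Sum>j\<in>S. cnj (x i) * \<rho> i j * x j)) \<and>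
     (\<Sum>i\<in>S. \<rho> i i) = 1"

text \<open>Tr_A(|psi><psi|) on B (x) C, B = registers 2,3 (index (c,w)), C = register 4 (index d).\<close>
definition reduced_BC :: "nat \<Rightarrow> state4 \<Rightarrow> (nat \<times> nat) \<times> nat \<Rightarrow> (nat \<times> nat) \<times> nat \<Rightarrow> complex" where
  "reduced_BC R \<psi> = (\<lambda>((c, w), d) ((c', w'), d'). \<Sum>v<R. \<psi> v c w d * cnj (\<psi> v c' w' d'))"

definition separable_BC :: "'a set \<Rightarrow> 'b set \<Rightarrow> ('a \<times> 'b \<Rightarrow> 'a \<times> 'b \<Rightarrow> complex) \<Rightarrow> bool" where
  "separable_BC SB SC \<rho> \<longleftrightarrow>
     (\<exists>(n :: nat) (p :: nat \<Rightarrow> real) \<beta> \<gamma>.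
        (\<forall>i<n. 0 \<le> p i) \<and> (\<Sum>i<n. p i) = 1 \<and>
        (\<forall>i<n. density_matrix SB (\<beta> i) \<and> density_matrix SC (\<gamma> i)) \<and>
        (\<forall>b\<in>SB. \<forall>c\<in>SC. \<forall>b'\<in>SB. \<forall>c'\<in>SC.
           \<rho> (b, c) (b', c') = (\<Sum>i<n. complex_of_real (p i) * \<beta> i b b' * \<gamma> i c c')))"

end

theory Submission
  imports Defs
begin

lemma exists_argmax:
  fixes f :: "nat \<Rightarrow> real"
  assumes "\<kappa> \<ge> 1"
  shows "\<exists>c<\<kappa>. \<forall>c'<\<kappa>. f c' \<le> f c"
proof -
  have "finite (f ` {..<\<kappa>})" by simp
  have "0 \<in> {..<\<kappa>}" using assms by simp
  then have "f ` {..<\<kappa>} \<noteq> {}" by blast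
  then have "Max (f ` {..<\<kappa>}) \<in> f ` {..<\<kappa>}" by (intro Max_in) auto
  then obtain c where c: "c < \<kappa>" "f c = Max (f ` {..<\<kappa>})" by auto
  show ?thesis using c by (intro exI[of _ c]) auto
qed

lemma CS_sum:
  fixes f :: "nat \<Rightarrow> real"
  shows "(\<Sum>v<R. f v)\<^sup>2 \<le> real R * (\<Sum>v<R. (f v)\<^sup>2)"
  using Cauchy_Schwarz_ineq_sum[of "\<lambda>_. 1" f "{..<R}"] by simp

lemma main_real:
  fixes a :: "nat \<Rightarrow> nat \<Rightarrow> complex" and R \<kappa> :: nat
  assumes R: "R \<ge> 1" and k: "\<kappa> \<ge> 1"
    and K: "(\<Sum>v<R. (\<Sum>c<\<kappa>. cmod (a v c))\<^sup>2) \<le> 1"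
  shows "\<exists>cv. (\<forall>v<R. cv v < \<kappa>) \<and> 0 \<le> 1 - (\<Sum>v<R. \<Sum>c<\<kappa>. (cmod (a v c))\<^sup>2) \<and>
     (cmod (\<Sum>v<R. \<Sum>c<\<kappa>. a v c))\<^sup>2 / R - (cmod (\<Sum>v<R. a v (cv v)))\<^sup>2 / R
       \<le> 2 * sqrt (1 - (\<Sum>v<R. \<Sum>c<\<kappa>. (cmod (a v c))\<^sup>2))"
proof -
  have "\<forall>v. \<exists>c. c < \<kappa> \<and> (\<forall>c'<\<kappa>. cmod (a v c') \<le> cmod (a v c))"
  proof
    fix v show "\<exists>c. c < \<kappa> \<and> (\<forall>c'<\<kappa>. cmod (a v c') \<le> cmod (a v c))"
      using exists_argmax[OF k, of "\<lambda>c. cmod (a v c)"] by simp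
  qed
  then have "\<exists>cv. \<forall>v. cv v < \<kappa> \<and> (\<forall>c'<\<kappa>. cmod (a v c') \<le> cmod (a v (cv v)))"
    by (rule choice)
  then obtain cv where cv0: "\<forall>v. cv v < \<kappa> \<and> (\<forall>c'<\<kappa>. cmod (a v c') \<le> cmod (a v (cv v)))"
    by blast
  have cv: "\<And>v. cv v < \<kappa>" "\<And>v c'. c' < \<kappa> \<Longrightarrow> cmod (a v c') \<le> cmod (a v (cv v))"
    using cv0 by auto
  define A where "A v = (\<Sum>c<\<kappa>. cmod (a v c))" for v
  define p where "p v = cmod (a v (cv v))" for v
  define r where "r v = A v - p v" for v
  define M where "M = (\<Sum>v<R. \<Sum>c<\<kappa>. (cmod (a v c))\<^sup>2)"
  have pA: "p v \<le> A v" for v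
    unfolding p_def A_def using cv(1)[of v] by (intro member_le_sum) auto
  have p0: "0 \<le> p v" for v unfolding p_def by simp
  have sq: "(\<Sum>c<\<kappa>. (cmod (a v c))\<^sup>2) \<le> p v * A v" for v
  proof -
    have "(\<Sum>c<\<kappa>. (cmod (a v c))\<^sup>2) \<le> (\<Sum>c<\<kappa>. p v * cmod (a v c))"
      using cv(2)[of _ v] unfolding p_def power2_eq_square
      by (intro sum_mono mult_right_mono) auto
    also have "\<dots> = p v * A v" unfolding A_def by (simp add: sum_distrib_left)
    finally show ?thesis .
  qed
  have r2: "(r v)\<^sup>2 \<le> (A v)\<^sup>2 - (\<Sum>c<\<kappa>. (cmod (a v c))\<^sup>2)" for v
  proof -
    have "(r v)\<^sup>2 = (A v)\<^sup>2 - p v * A v - p v * (A v - p v)"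
      unfolding r_def by (simp add: power2_eq_square algebra_simps)
    also have "\<dots> \<le> (A v)\<^sup>2 - p v * A v" using pA[of v] p0[of v] by simp
    finally show ?thesis using sq[of v] by simp
  qed
  have r0: "0 \<le> r v" for v using pA[of v] unfolding r_def by simp
  have sumr2: "(\<Sum>v<R. (r v)\<^sup>2) \<le> 1 - M"
  proof -
    have "(\<Sum>v<R. (r v)\<^sup>2) \<le> (\<Sum>v<R. (A v)\<^sup>2 - (\<Sum>c<\<kappa>. (cmod (a v c))\<^sup>2))"
      by (intro sum_mono r2)
    also have "\<dots> = (\<Sum>v<R. (A v)\<^sup>2) - M" unfolding M_def by (simp add: sum_subtractf)
    finally show ?thesis using K unfolding A_def by simp
  qed
  define S where "S = (\<Sum>v<R. \<Sum>c<\<kappa>. a v c)"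
  define T where "T = (\<Sum>v<R. a v (cv v))"
  define P where "P = (\<Sum>v<R. r v)"
  have diffv: "cmod ((\<Sum>c<\<kappa>. a v c) - a v (cv v)) \<le> r v" for v
  proof -
    have "(\<Sum>c<\<kappa>. a v c) = a v (cv v) + (\<Sum>c\<in>{..<\<kappa>} - {cv v}. a v c)"
      using cv(1)[of v] by (subst sum.remove[of _ "cv v"]) auto
    moreover have "(\<Sum>c<\<kappa>. cmod (a v c)) = cmod (a v (cv v)) + (\<Sum>c\<in>{..<\<kappa>} - {cv v}. cmod (a v c))"
      using cv(1)[of v] by (subst sum.remove[of _ "cv v"]) auto
    ultimately show ?thesis unfolding r_def A_def p_def
      using norm_sum[of "\<lambda>c. a v c" "{..<\<kappa>} - {cv v}"] by simp
  qed
  have ST: "cmod (S - T) \<le> P"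
  proof -
    have "S - T = (\<Sum>v<R. (\<Sum>c<\<kappa>. a v c) - a v (cv v))"
      unfolding S_def T_def by (simp add: sum_subtractf)
    then have "cmod (S - T) \<le> (\<Sum>v<R. cmod ((\<Sum>c<\<kappa>. a v c) - a v (cv v)))"
      using norm_sum by metis
    also have "\<dots> \<le> P" unfolding P_def by (intro sum_mono diffv)
    finally show ?thesis .
  qed
  have Tp: "cmod T \<le> (\<Sum>v<R. p v)" unfolding T_def p_def by (rule norm_sum)
  have PA: "P + (\<Sum>v<R. p v) = (\<Sum>v<R. A v)" unfolding P_def r_def by (simp add: sum_subtractf)
  have P0: "0 \<le> P" unfolding P_def using r0 by (simp add: sum_nonneg)
  have "cmod S \<le> cmod T + P" using ST norm_triangle_ineq2[of S T] by simp
  then have "(cmod S)\<^sup>2 \<le> (cmod T + P)\<^sup>2" by (simp add: power_mono)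
  have e1: "(cmod T + P)\<^sup>2 - (cmod T)\<^sup>2 = P * (2 * cmod T + P)"
    by (simp add: power2_eq_square algebra_simps)
  have e2: "2 * cmod T + P \<le> 2 * (\<Sum>v<R. A v)" using Tp PA P0 by linarith
  have "P * (2 * cmod T + P) \<le> P * (2 * (\<Sum>v<R. A v))" using e2 P0 by (rule mult_left_mono)
  then have d1: "(cmod S)\<^sup>2 - (cmod T)\<^sup>2 \<le> 2 * P * (\<Sum>v<R. A v)"
    using e1 \<open>(cmod S)\<^sup>2 \<le> (cmod T + P)\<^sup>2\<close> by linarith
  have "real R * (\<Sum>v<R. (r v)\<^sup>2) \<le> real R * (1 - M)" using sumr2 by (rule mult_left_mono) simp
  then have P2: "P\<^sup>2 \<le> R * (1 - M)" using CS_sum[of r R] unfolding P_def by linarith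
  have "real R * (\<Sum>v<R. (A v)\<^sup>2) \<le> real R * 1" using K unfolding A_def by (intro mult_left_mono) simp_all
  then have A2: "(\<Sum>v<R. A v)\<^sup>2 \<le> R" using CS_sum[of A R] by linarith
  have "0 \<le> (\<Sum>v<R. (r v)\<^sup>2)" by (simp add: sum_nonneg)
  then have M1: "0 \<le> 1 - M" using sumr2 by linarith
  have A0: "0 \<le> (\<Sum>v<R. A v)" unfolding A_def by (simp add: sum_nonneg)
  have "P\<^sup>2 * (\<Sum>v<R. A v)\<^sup>2 \<le> (R * (1 - M)) * R"
    by (rule mult_mono[OF P2 A2]) (use M1 in simp_all)
  moreover have "(P * (\<Sum>v<R. A v))\<^sup>2 = P\<^sup>2 * (\<Sum>v<R. A v)\<^sup>2" by (rule power_mult_distrib)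
  moreover have "(R * sqrt (1 - M))\<^sup>2 = (R * (1 - M)) * R"
    using M1 by (simp add: power_mult_distrib power2_eq_square)
  ultimately have "(P * (\<Sum>v<R. A v))\<^sup>2 \<le> (R * sqrt (1 - M))\<^sup>2" by simp
  then have "P * (\<Sum>v<R. A v) \<le> R * sqrt (1 - M)"
    by (rule power2_le_imp_le) (use M1 in simp)
  with d1 have "(cmod S)\<^sup>2 - (cmod T)\<^sup>2 \<le> R * (2 * sqrt (1 - M))" by linarith
  then have "((cmod S)\<^sup>2 - (cmod T)\<^sup>2) / R \<le> 2 * sqrt (1 - M)"
    using R by (simp add: divide_le_eq mult.commute)
  then show ?thesis using cv(1) M1 unfolding S_def T_def M_def
    by (intro exI[of _ cv]) (simp add: diff_divide_distrib)
qed

lemma sum1: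
  assumes "finite S" "i \<in> S" "\<And>l. l \<in> S \<Longrightarrow> l \<noteq> i \<Longrightarrow> f l = 0"
  shows "sum f S = f i"
proof -
  have "sum f S = sum f {i}"
    using assms by (intro sum.mono_neutral_right) auto
  then show ?thesis by simp
qed

lemma sum2:
  assumes "finite S" "i \<in> S" "j \<in> S" "i \<noteq> j" "\<And>l. l \<in> S \<Longrightarrow> l \<noteq> i \<Longrightarrow> l \<noteq> j \<Longrightarrow> f l = 0"
  shows "sum f S = f i + f j"
proof -
  have "sum f S = sum f {i, j}"
    using assms by (intro sum.mono_neutral_right) auto
  then show ?thesis using assms(4) by simp
qed

lemma dm_herm:
  assumes "density_matrix S M" "i \<in> S" "j \<in> S"
  shows "M j i = cnj (M i j)"
  using assms unfolding density_matrix_def by blast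

lemma dm_pos:
  assumes "density_matrix S M"
  shows "0 \<le> Re (\<Sum>i\<in>S. \<Sum>j\<in>S. cnj (x i) * M i j * x j)"
  using assms unfolding density_matrix_def by blast

lemma dm_diag:
  assumes "density_matrix S M" "finite S" "i \<in> S"
  shows "0 \<le> Re (M i i)" "M i i = of_real (Re (M i i))"
proof -
  have herm: "M i i = cnj (M i i)" using dm_herm[OF assms(1,3,3)] .
  then show "M i i = of_real (Re (M i i))"
    by (metis Reals_cnj_iff of_real_Re)
  define x :: "_ \<Rightarrow> complex" where "x l = (if l = i then 1 else 0)" for l
  have "0 \<le> Re (\<Sum>l\<in>S. \<Sum>l'\<in>S. cnj (x l) * M l l' * x l')"
    by (rule dm_pos[OF assms(1)])
  also have "(\<Sum>l\<in>S. \<Sum>l'\<in>S. cnj (x l) * M l l' * x l') = (\<Sum>l'\<in>S. cnj (x i) * M i l' * x l')"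
    using assms by (intro sum1) (auto simp: x_def)
  also have "\<dots> = cnj (x i) * M i i * x i"
    using assms by (intro sum1) (auto simp: x_def)
  finally show "0 \<le> Re (M i i)" by (simp add: x_def)
qed

lemma dm_aux:
  assumes "density_matrix S M" "finite S" "i \<in> S" "j \<in> S" "i \<noteq> j"
  shows "0 \<le> r\<^sup>2 * Re (M i i) + Re (M j j) * (cmod (M i j))\<^sup>2 - 2 * r * (cmod (M i j))\<^sup>2"
proof -
  define m where "m = M i j"
  have herm: "M j i = cnj m" unfolding m_def by (rule dm_herm[OF assms(1,3,4)])
  define p where "p = Re (M i i)"
  define q where "q = Re (M j j)"
  have pi: "M i i = of_real p" and pj: "M j j = of_real q"
    unfolding p_def q_def using dm_diag(2)[OF assms(1,2,3)] dm_diag(2)[OF assms(1,2,4)] by auto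
  have mm: "m * cnj m = of_real ((cmod m)\<^sup>2)" by (rule complex_norm_square[symmetric])
  define x :: "_ \<Rightarrow> complex" where "x l = (if l = i then of_real r else if l = j then - cnj m else 0)" for l
  have "0 \<le> Re (\<Sum>l\<in>S. \<Sum>l'\<in>S. cnj (x l) * M l l' * x l')"
    by (rule dm_pos[OF assms(1)])
  also have "(\<Sum>l\<in>S. \<Sum>l'\<in>S. cnj (x l) * M l l' * x l') =
     (\<Sum>l\<in>S. cnj (x l) * M l i * x i + cnj (x l) * M l j * x j)"
  proof (rule sum.cong[OF refl])
    fix l assume "l \<in> S"
    show "(\<Sum>l'\<in>S. cnj (x l) * M l l' * x l') = cnj (x l) * M l i * x i + cnj (x l) * M l j * x j"
      using assms by (intro sum2) (auto simp: x_def)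
  qed
  also have "\<dots> = (cnj (x i) * M i i * x i + cnj (x i) * M i j * x j) +
                   (cnj (x j) * M j i * x i + cnj (x j) * M j j * x j)"
    using assms by (intro sum2) (auto simp: x_def)
  also have "\<dots> = of_real r * M i i * of_real r + of_real r * m * (- cnj m) +
                   (- m) * cnj m * of_real r + (- m) * M j j * (- cnj m)"
    using assms by (simp add: x_def m_def herm)
  also have "\<dots> = of_real r * of_real r * of_real p - 2 * of_real r * (m * cnj m) + (m * cnj m) * of_real q"
    unfolding pi pj by (simp add: algebra_simps)
  also have "\<dots> = of_real (r\<^sup>2 * p + q * (cmod m)\<^sup>2 - 2 * r * (cmod m)\<^sup>2)"
    unfolding mm by (simp add: power2_eq_square algebra_simps)
  finally show ?thesis by (simp add: m_def p_def q_def)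
qed

lemma dm_off:
  assumes "density_matrix S M" "finite S" "i \<in> S" "j \<in> S"
  shows "(cmod (M i j))\<^sup>2 \<le> Re (M i i) * Re (M j j)"
proof (cases "i = j")
  case True
  have "0 \<le> Re (M i i)" "M i i = of_real (Re (M i i))" using dm_diag[OF assms(1-3)] by auto
  then have "cmod (M i i) = Re (M i i)" by (metis abs_of_nonneg norm_of_real)
  then show ?thesis using True by (simp add: power2_eq_square)
next
  case False
  define p where "p = Re (M i i)"
  define q where "q = Re (M j j)"
  define n where "n = (cmod (M i j))\<^sup>2"
  have p0: "0 \<le> p" and q0: "0 \<le> q"
    using dm_diag(1)[OF assms(1,2,3)] dm_diag(1)[OF assms(1,2,4)] unfolding p_def q_def by auto
  have n': "(cmod (M j i))\<^sup>2 = n"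
  proof -
    have "M j i = cnj (M i j)" by (rule dm_herm[OF assms(1,3,4)])
    then show ?thesis unfolding n_def by simp
  qed
  have h1: "\<And>r. 0 \<le> r\<^sup>2 * p + q * n - 2 * r * n"
    using dm_aux[OF assms False] unfolding p_def q_def n_def by blast
  have h2: "\<And>r. 0 \<le> r\<^sup>2 * q + p * n - 2 * r * n"
  proof -
    fix r
    have "0 \<le> r\<^sup>2 * Re (M j j) + Re (M i i) * (cmod (M j i))\<^sup>2 - 2 * r * (cmod (M j i))\<^sup>2"
      using dm_aux[OF assms(1,2,4,3)] False by auto
    then show "0 \<le> r\<^sup>2 * q + p * n - 2 * r * n" unfolding n' p_def q_def .
  qed
  consider "q > 0" | "p > 0" | "p = 0" "q = 0" using p0 q0 by linarith
  then have "n \<le> p * q"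
  proof cases
    case 1
    have "0 \<le> q * (p * q - n)" using h1[of q] by (simp add: power2_eq_square algebra_simps)
    then show ?thesis using 1 by (simp add: zero_le_mult_iff)
  next
    case 2
    have "0 \<le> p * (p * q - n)" using h2[of p] by (simp add: power2_eq_square algebra_simps)
    then show ?thesis using 2 by (simp add: zero_le_mult_iff)
  next
    case 3
    then show ?thesis using h1[of 1] by simp
  qed
  then show ?thesis unfolding n_def p_def q_def .
qed

lemma cnj_sgn_mult: "cnj (sgn a) * a = complex_of_real (cmod a)"
proof (cases "a = 0")
  case True then show ?thesis by simp
next
  case False
  have "cnj (sgn a) * a = (a * cnj a) / complex_of_real (cmod a)"
    by (simp add: sgn_div_norm scaleR_conv_of_real field_simps)
  also have "\<dots> = complex_of_real ((cmod a)\<^sup>2) / complex_of_real (cmod a)"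
    by (simp only: complex_norm_square)
  also have "\<dots> = complex_of_real (cmod a)" using False by (simp add: power2_eq_square)
  finally show ?thesis .
qed

lemma amgm_aux:
  fixes X Y b b' g g' :: real
  assumes "0 \<le> X" "0 \<le> Y" "0 \<le> b" "0 \<le> b'" "0 \<le> g" "0 \<le> g'"
    "X\<^sup>2 \<le> b * b'" "Y\<^sup>2 \<le> g * g'"
  shows "X * Y \<le> (b * g' + b' * g) / 2"
proof -
  have "(X * Y)\<^sup>2 = X\<^sup>2 * Y\<^sup>2" by (simp add: power_mult_distrib)
  also have "\<dots> \<le> (b * b') * (g * g')"
    using assms by (intro mult_mono) auto
  also have "\<dots> = (b * g') * (b' * g)" by simp
  also have "\<dots> \<le> ((b * g' + b' * g) / 2)\<^sup>2"
  proof -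
    have "0 \<le> (b * g' - b' * g)\<^sup>2" by simp
    then show ?thesis by (simp add: power2_eq_square algebra_simps)
  qed
  finally show ?thesis
    by (rule power2_le_imp_le) (use assms in simp)
qed

lemma norm_sum3:
  fixes f :: "nat \<Rightarrow> nat \<Rightarrow> nat \<Rightarrow> complex"
  shows "cmod (\<Sum>w\<in>A. \<Sum>c\<in>B. \<Sum>c'\<in>C. f w c c') \<le> (\<Sum>w\<in>A. \<Sum>c\<in>B. \<Sum>c'\<in>C. cmod (f w c c'))"
proof -
  have "cmod (\<Sum>w\<in>A. \<Sum>c\<in>B. \<Sum>c'\<in>C. f w c c') \<le> (\<Sum>w\<in>A. cmod (\<Sum>c\<in>B. \<Sum>c'\<in>C. f w c c'))"
    by (rule norm_sum)
  also have "\<dots> \<le> (\<Sum>w\<in>A. \<Sum>c\<in>B. cmod (\<Sum>c'\<in>C. f w c c'))"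
    by (intro sum_mono norm_sum)
  also have "\<dots> \<le> (\<Sum>w\<in>A. \<Sum>c\<in>B. \<Sum>c'\<in>C. cmod (f w c c'))"
    by (intro sum_mono norm_sum)
  finally show ?thesis .
qed

lemma dm_trace_re:
  assumes "density_matrix S M"
  shows "(\<Sum>i\<in>S. Re (M i i)) = 1"
proof -
  have "(\<Sum>i\<in>S. M i i) = 1" using assms unfolding density_matrix_def by blast
  then have "Re (\<Sum>i\<in>S. M i i) = 1" by simp
  then show ?thesis by (simp add: Re_sum)
qed

lemma K_sep:
  fixes \<psi> :: state4
  assumes sep: "separable_BC ({..<\<kappa>} \<times> {..<R}) {..<\<kappa>} (reduced_BC R \<psi>)"
  shows "(\<Sum>v<R. (\<Sum>c<\<kappa>. cmod (\<psi> v c v c))\<^sup>2) \<le> 1"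
proof -
  define x where "x w c = sgn (\<psi> w c w c)" for w c
  define \<rho> where "\<rho> = reduced_BC R \<psi>"
  define Q where "Q = (\<Sum>w<R. \<Sum>c<\<kappa>. \<Sum>c'<\<kappa>. cnj (x w c) * x w c' * \<rho> ((c,w),c) ((c',w),c'))"
  define z where "z w v = (\<Sum>c<\<kappa>. cnj (x w c) * \<psi> v c w c)" for w v
  have Qw: "(\<Sum>c<\<kappa>. \<Sum>c'<\<kappa>. cnj (x w c) * x w c' * \<rho> ((c,w),c) ((c',w),c'))
           = complex_of_real (\<Sum>v<R. (cmod (z w v))\<^sup>2)" for w
  proof -
    have "complex_of_real (\<Sum>v<R. (cmod (z w v))\<^sup>2) = (\<Sum>v<R. z w v * cnj (z w v))"
      by (simp only: of_real_sum complex_norm_square)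
    also have "\<dots> = (\<Sum>v<R. \<Sum>c<\<kappa>. \<Sum>c'<\<kappa>. cnj (x w c) * \<psi> v c w c * (x w c' * cnj (\<psi> v c' w c')))"
      unfolding z_def by (simp add: sum_product)
    also have "\<dots> = (\<Sum>c<\<kappa>. \<Sum>c'<\<kappa>. \<Sum>v<R. cnj (x w c) * \<psi> v c w c * (x w c' * cnj (\<psi> v c' w c')))"
      by (simp only: sum.swap[of _ "{..<R}"])
    also have "\<dots> = (\<Sum>c<\<kappa>. \<Sum>c'<\<kappa>. cnj (x w c) * x w c' * \<rho> ((c,w),c) ((c',w),c'))"
      unfolding \<rho>_def reduced_BC_def by (simp add: sum_distrib_left algebra_simps)
    finally show ?thesis by simp
  qed
  have Qa: "Q = complex_of_real (\<Sum>w<R. \<Sum>v<R. (cmod (z w v))\<^sup>2)"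
    unfolding Q_def Qw by (simp only: of_real_sum)
  have lower: "(\<Sum>v<R. (\<Sum>c<\<kappa>. cmod (\<psi> v c v c))\<^sup>2) \<le> (\<Sum>w<R. \<Sum>v<R. (cmod (z w v))\<^sup>2)"
  proof (rule sum_mono)
    fix w assume w: "w \<in> {..<R}"
    have zww: "z w w = complex_of_real (\<Sum>c<\<kappa>. cmod (\<psi> w c w c))"
      unfolding z_def x_def by (simp add: cnj_sgn_mult of_real_sum)
    have "(\<Sum>c<\<kappa>. cmod (\<psi> w c w c))\<^sup>2 = (cmod (z w w))\<^sup>2"
      unfolding zww norm_of_real by (simp add: sum_nonneg)
    also have "\<dots> \<le> (\<Sum>v<R. (cmod (z w v))\<^sup>2)"
      using w by (intro member_le_sum) auto
    finally show "(\<Sum>c<\<kappa>. cmod (\<psi> w c w c))\<^sup>2 \<le> (\<Sum>v<R. (cmod (z w v))\<^sup>2)" .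
  qed
  obtain n :: nat and p \<beta> \<gamma> where p0: "\<forall>i<n. 0 \<le> p i" and p1: "(\<Sum>i<n. p i) = 1"
    and dms: "\<forall>i<n. density_matrix ({..<\<kappa>} \<times> {..<R}) (\<beta> i) \<and> density_matrix {..<\<kappa>} (\<gamma> i)"
    and dec: "\<forall>b\<in>{..<\<kappa>} \<times> {..<R}. \<forall>c\<in>{..<\<kappa>}. \<forall>b'\<in>{..<\<kappa>} \<times> {..<R}. \<forall>c'\<in>{..<\<kappa>}.
           \<rho> (b, c) (b', c') = (\<Sum>i<n. complex_of_real (p i) * \<beta> i b b' * \<gamma> i c c')"
    using sep unfolding separable_BC_def \<rho>_def by (elim exE conjE) (rule that, auto simp: \<rho>_def)
  define b where "b k c w = Re (\<beta> k (c,w) (c,w))" for k c w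
  define g where "g k c = Re (\<gamma> k c c)" for k c
  have term_bound: "cmod (cnj (x w c) * x w c' * \<rho> ((c,w),c) ((c',w),c'))
      \<le> (\<Sum>k<n. p k * ((b k c w * g k c' + b k c' w * g k c) / 2))"
    if w: "w < R" and c: "c < \<kappa>" and c': "c' < \<kappa>" for w c c'
  proof -
    have f1: "cmod (cnj (x w c) * x w c' * \<rho> ((c,w),c) ((c',w),c')) \<le> cmod (\<rho> ((c,w),c) ((c',w),c'))"
    proof -
      have "cmod (x w c) \<le> 1" "cmod (x w c') \<le> 1" unfolding x_def by (simp_all add: norm_sgn)
      then have "cmod (cnj (x w c)) * cmod (x w c') \<le> 1"
        by (simp add: mult_le_one)
      then have "cmod (cnj (x w c)) * cmod (x w c') * cmod (\<rho> ((c,w),c) ((c',w),c'))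
          \<le> 1 * cmod (\<rho> ((c,w),c) ((c',w),c'))"
        by (intro mult_right_mono) auto
      then show ?thesis by (simp add: norm_mult)
    qed
    have eq: "\<rho> ((c,w),c) ((c',w),c') = (\<Sum>k<n. complex_of_real (p k) * \<beta> k (c,w) (c',w) * \<gamma> k c c')"
      using dec w c c' by auto
    have "cmod (\<rho> ((c,w),c) ((c',w),c')) \<le> (\<Sum>k<n. cmod (complex_of_real (p k) * \<beta> k (c,w) (c',w) * \<gamma> k c c'))"
      unfolding eq by (rule norm_sum)
    also have "\<dots> \<le> (\<Sum>k<n. p k * ((b k c w * g k c' + b k c' w * g k c) / 2))"
    proof (rule sum_mono)
      fix k assume k: "k \<in> {..<n}"
      have dB: "density_matrix ({..<\<kappa>} \<times> {..<R}) (\<beta> k)" and dG: "density_matrix {..<\<kappa>} (\<gamma> k)"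
        using dms k by auto
      have fin: "finite ({..<\<kappa>} \<times> {..<R})" by simp
      have m1: "(c,w) \<in> {..<\<kappa>} \<times> {..<R}" "(c',w) \<in> {..<\<kappa>} \<times> {..<R}" using w c c' by auto
      have m2: "c \<in> {..<\<kappa>}" "c' \<in> {..<\<kappa>}" using c c' by auto
      have "cmod (\<beta> k (c,w) (c',w)) * cmod (\<gamma> k c c') \<le> (b k c w * g k c' + b k c' w * g k c) / 2"
        unfolding b_def g_def
        by (rule amgm_aux[OF norm_ge_zero norm_ge_zero dm_diag(1)[OF dB fin m1(1)] dm_diag(1)[OF dB fin m1(2)]
             dm_diag(1)[OF dG _ m2(1)] dm_diag(1)[OF dG _ m2(2)] dm_off[OF dB fin m1] dm_off[OF dG _ m2]]) simp_all
      moreover have "0 \<le> p k" using p0 k by auto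
      ultimately have "p k * (cmod (\<beta> k (c,w) (c',w)) * cmod (\<gamma> k c c')) \<le> p k * ((b k c w * g k c' + b k c' w * g k c) / 2)"
        by (intro mult_left_mono)
      then show "cmod (complex_of_real (p k) * \<beta> k (c,w) (c',w) * \<gamma> k c c') \<le> p k * ((b k c w * g k c' + b k c' w * g k c) / 2)"
        using \<open>0 \<le> p k\<close> by (simp add: norm_mult mult.assoc)
    qed
    finally show ?thesis using f1 by linarith
  qed
  have "cmod Q \<le> (\<Sum>w<R. \<Sum>c<\<kappa>. \<Sum>c'<\<kappa>. cmod (cnj (x w c) * x w c' * \<rho> ((c,w),c) ((c',w),c')))"
    unfolding Q_def by (rule norm_sum3)
  also have "\<dots> \<le> (\<Sum>w<R. \<Sum>c<\<kappa>. \<Sum>c'<\<kappa>. \<Sum>k<n. p k * ((b k c w * g k c' + b k c' w * g k c) / 2))"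
    by (intro sum_mono term_bound) auto
  also have "\<dots> = (\<Sum>k<n. \<Sum>w<R. \<Sum>c<\<kappa>. \<Sum>c'<\<kappa>. p k * ((b k c w * g k c' + b k c' w * g k c) / 2))"
    by (simp only: sum.swap[of _ _ "{..<n}"])
  also have "\<dots> = (\<Sum>k<n. p k * (\<Sum>w<R. \<Sum>c<\<kappa>. b k c w) * (\<Sum>c<\<kappa>. g k c))"
  proof (rule sum.cong[OF refl])
    fix k
    have pw: "(\<Sum>c<\<kappa>. \<Sum>c'<\<kappa>. b k c w * g k c' + b k c' w * g k c) = 2 * (\<Sum>c<\<kappa>. b k c w) * (\<Sum>c<\<kappa>. g k c)" for w
    proof -
      have e1: "(\<Sum>c<\<kappa>. \<Sum>c'<\<kappa>. b k c w * g k c') = (\<Sum>c<\<kappa>. b k c w) * (\<Sum>c<\<kappa>. g k c)"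
        by (simp add: sum_product)
      have e2: "(\<Sum>c<\<kappa>. \<Sum>c'<\<kappa>. b k c' w * g k c) = (\<Sum>c<\<kappa>. g k c) * (\<Sum>c<\<kappa>. b k c w)"
        unfolding sum_product by (simp add: mult.commute)
      show ?thesis using e1 e2 by (simp add: sum.distrib)
    qed
    then show "(\<Sum>w<R. \<Sum>c<\<kappa>. \<Sum>c'<\<kappa>. p k * ((b k c w * g k c' + b k c' w * g k c) / 2)) =
        p k * (\<Sum>w<R. \<Sum>c<\<kappa>. b k c w) * (\<Sum>c<\<kappa>. g k c)"
    proof -
      have "(\<Sum>w<R. \<Sum>c<\<kappa>. \<Sum>c'<\<kappa>. p k * ((b k c w * g k c' + b k c' w * g k c) / 2))
          = (\<Sum>w<R. (p k / 2) * (\<Sum>c<\<kappa>. \<Sum>c'<\<kappa>. b k c w * g k c' + b k c' w * g k c))"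
        by (simp add: sum_distrib_left)
      also have "\<dots> = (\<Sum>w<R. (p k * (\<Sum>c<\<kappa>. g k c)) * (\<Sum>c<\<kappa>. b k c w))"
        using pw by (simp add: mult_ac)
      also have "\<dots> = (p k * (\<Sum>c<\<kappa>. g k c)) * (\<Sum>w<R. \<Sum>c<\<kappa>. b k c w)"
        by (rule sum_distrib_left[symmetric])
      finally show ?thesis by simp
    qed
  qed
  also have "\<dots> = (\<Sum>k<n. p k)"
  proof (rule sum.cong[OF refl])
    fix k assume k: "k \<in> {..<n}"
    have dB: "density_matrix ({..<\<kappa>} \<times> {..<R}) (\<beta> k)" and dG: "density_matrix {..<\<kappa>} (\<gamma> k)"
      using dms k by auto
    have "(\<Sum>w<R. \<Sum>c<\<kappa>. b k c w) = (\<Sum>c<\<kappa>. \<Sum>w<R. b k c w)" by (rule sum.swap)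
    also have "\<dots> = (\<Sum>i\<in>{..<\<kappa>} \<times> {..<R}. Re (\<beta> k i i))"
      unfolding b_def by (simp add: sum.cartesian_product)
    also have "\<dots> = 1" by (rule dm_trace_re[OF dB])
    finally have 1: "(\<Sum>w<R. \<Sum>c<\<kappa>. b k c w) = 1" .
    have 2: "(\<Sum>c<\<kappa>. g k c) = 1" unfolding g_def by (rule dm_trace_re[OF dG])
    show "p k * (\<Sum>w<R. \<Sum>c<\<kappa>. b k c w) * (\<Sum>c<\<kappa>. g k c) = p k" using 1 2 by simp
  qed
  also have "\<dots> = 1" by (rule p1)
  finally have "cmod Q \<le> 1" .
  moreover have "Re Q \<le> cmod Q" by (rule complex_Re_le_cmod)
  moreover have "Re Q = (\<Sum>w<R. \<Sum>v<R. (cmod (z w v))\<^sup>2)" using Qa by simp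
  ultimately show ?thesis using lower by linarith
qed

lemma mod_zero_iff:
  fixes v w R :: nat
  assumes "v < R" "w < R"
  shows "(w + R - v mod R) mod R = 0 \<longleftrightarrow> w = v"
proof (cases "w < v")
  case True
  have vm: "v mod R = v" using assms(1) by (rule mod_less)
  have "w + R - v mod R < R" "0 < w + R - v mod R" using True assms unfolding vm by linarith+
  then show ?thesis using True by (simp only: mod_less) simp
next
  case False
  have vm: "v mod R = v" using assms(1) by (rule mod_less)
  have e: "w + R - v mod R = (w - v) + R" using False unfolding vm by linarith
  have l: "w - v < R" using assms by linarith
  have "(w + R - v mod R) mod R = w - v" unfolding e mod_add_self2 using l by (rule mod_less)
  then show ?thesis using False by linarith
qed

lemma plus'_val:
  assumes "v < R" "w < R" "c < \<kappa>" "d < \<kappa>"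
  shows "plus' R \<kappa> v c w d = (if w = v \<and> d = c then complex_of_real (1 / sqrt (real (R * \<kappa>))) else 0)"
proof -
  have e: "plus' R \<kappa> v c w d = (if (w + R - v mod R) mod R = 0 \<and> (d + \<kappa> - c mod \<kappa>) mod \<kappa> = 0
      then complex_of_real (1 / sqrt (real (R * \<kappa>))) else 0)"
    unfolding plus'_def CNOT13_def CNOT24_def unif00_def by (rule refl)
  show ?thesis unfolding e mod_zero_iff[OF assms(1,2)] mod_zero_iff[OF assms(3,4)] ..
qed

lemma density_val:
  assumes "R \<ge> 1" "\<kappa> \<ge> 1"
  shows "density_accept R \<kappa> \<psi> = (cmod (\<Sum>v<R. \<Sum>c<\<kappa>. \<psi> v c v c))\<^sup>2 / (real R * real \<kappa>)"
proof -
  define k where "k = complex_of_real (1 / sqrt (real (R * \<kappa>)))"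
  have "inner4 R \<kappa> (plus' R \<kappa>) \<psi> = (\<Sum>v<R. \<Sum>c<\<kappa>. k * \<psi> v c v c)"
    unfolding inner4_def
  proof (intro sum.cong refl)
    fix v c assume v: "v \<in> {..<R}" and c: "c \<in> {..<\<kappa>}"
    have "(\<Sum>w<R. \<Sum>d<\<kappa>. cnj (plus' R \<kappa> v c w d) * \<psi> v c w d) = (\<Sum>d<\<kappa>. cnj (plus' R \<kappa> v c v d) * \<psi> v c v d)"
      using v c by (intro sum1) (auto simp: plus'_val)
    also have "\<dots> = cnj (plus' R \<kappa> v c v c) * \<psi> v c v c"
      using v c by (intro sum1) (auto simp: plus'_val)
    also have "\<dots> = k * \<psi> v c v c" using v c by (simp add: plus'_val k_def)
    finally show "(\<Sum>w<R. \<Sum>d<\<kappa>. cnj (plus' R \<kappa> v c w d) * \<psi> v c w d) = k * \<psi> v c v c" .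
  qed
  also have "\<dots> = k * (\<Sum>v<R. \<Sum>c<\<kappa>. \<psi> v c v c)" by (simp add: sum_distrib_left)
  finally have "density_accept R \<kappa> \<psi> = (cmod k * cmod (\<Sum>v<R. \<Sum>c<\<kappa>. \<psi> v c v c))\<^sup>2"
    unfolding density_accept_def by (simp add: norm_mult)
  also have "\<dots> = (cmod k)\<^sup>2 * (cmod (\<Sum>v<R. \<Sum>c<\<kappa>. \<psi> v c v c))\<^sup>2" by (simp add: power_mult_distrib)
  also have "(cmod k)\<^sup>2 = 1 / (real R * real \<kappa>)"
  proof -
    have "cmod k = 1 / sqrt (real (R * \<kappa>))" unfolding k_def norm_of_real by simp
    then show ?thesis by (simp add: power_divide)
  qed
  finally show ?thesis by simp
qed

lemma match_val:
  shows "matchcheck_accept R \<kappa> \<psi> = (\<Sum>v<R. \<Sum>c<\<kappa>. (cmod (\<psi> v c v c))\<^sup>2)"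
  unfolding matchcheck_accept_def
proof (intro sum.cong refl)
  fix v c assume v: "v \<in> {..<R}" and c: "c \<in> {..<\<kappa>}"
  have "(\<Sum>w<R. \<Sum>d<\<kappa>. if (v, c) = (w, d) then (cmod (\<psi> v c w d))\<^sup>2 else 0)
      = (\<Sum>d<\<kappa>. if (v, c) = (v, d) then (cmod (\<psi> v c v d))\<^sup>2 else 0)"
    using v c by (intro sum1) auto
  also have "\<dots> = (cmod (\<psi> v c v c))\<^sup>2"
    using v c by (subst sum1[of _ c]) auto
  finally show "(\<Sum>w<R. \<Sum>d<\<kappa>. if (v, c) = (w, d) then (cmod (\<psi> v c w d))\<^sup>2 else 0) = (cmod (\<psi> v c v c))\<^sup>2" .
qed

theorem claim4p6:
  fixes R \<kappa> :: nat and \<psi> :: state4 and dD dM :: real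
  assumes "R \<ge> 1" and "\<kappa> \<ge> 1"
    and "is_state4 R \<kappa> \<psi>"
    and "separable_BC ({..<\<kappa>} \<times> {..<R}) {..<\<kappa>} (reduced_BC R \<psi>)"
    and "density_accept R \<kappa> \<psi> = 1 / real \<kappa> - dD"
    and "matchcheck_accept R \<kappa> \<psi> = 1 - dM"
  shows "\<exists>chi. rigid_after_CNOT R \<kappa> chi \<and>
           (cmod (inner4 R \<kappa> chi \<psi>))\<^sup>2
             \<ge> 1 - real \<kappa> * dD - (real \<kappa> + 1) * sqrt ((real \<kappa> + 1) * dM)"
proof -
  define a where "a v c = \<psi> v c v c" for v c
  have K: "(\<Sum>v<R. (\<Sum>c<\<kappa>. cmod (a v c))\<^sup>2) \<le> 1"
    unfolding a_def by (rule K_sep[OF assms(4)])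
  obtain cv where cv: "\<forall>v<R. cv v < \<kappa>"
    and dM0: "0 \<le> 1 - (\<Sum>v<R. \<Sum>c<\<kappa>. (cmod (a v c))\<^sup>2)"
    and bnd: "(cmod (\<Sum>v<R. \<Sum>c<\<kappa>. a v c))\<^sup>2 / R - (cmod (\<Sum>v<R. a v (cv v)))\<^sup>2 / R
       \<le> 2 * sqrt (1 - (\<Sum>v<R. \<Sum>c<\<kappa>. (cmod (a v c))\<^sup>2))"
    using main_real[OF assms(1,2) K] by blast
  have Mv: "(\<Sum>v<R. \<Sum>c<\<kappa>. (cmod (a v c))\<^sup>2) = 1 - dM"
    using assms(6) match_val unfolding a_def by metis
  then have dM: "0 \<le> dM" and bnd2: "(cmod (\<Sum>v<R. \<Sum>c<\<kappa>. a v c))\<^sup>2 / R - (cmod (\<Sum>v<R. a v (cv v)))\<^sup>2 / R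
       \<le> 2 * sqrt dM" using dM0 bnd by simp_all
  have dens: "1 - real \<kappa> * dD = (cmod (\<Sum>v<R. \<Sum>c<\<kappa>. a v c))\<^sup>2 / R"
  proof -
    have "1 / real \<kappa> - dD = (cmod (\<Sum>v<R. \<Sum>c<\<kappa>. a v c))\<^sup>2 / (real R * real \<kappa>)"
      using assms(5) density_val[OF assms(1,2), of \<psi>] unfolding a_def by simp
    moreover have "real \<kappa> * (1 / real \<kappa> - dD) = 1 - real \<kappa> * dD"
      using assms(2) by (simp add: right_diff_distrib)
    ultimately have "1 - real \<kappa> * dD = real \<kappa> * ((cmod (\<Sum>v<R. \<Sum>c<\<kappa>. a v c))\<^sup>2 / (real R * real \<kappa>))"
      by simp
    also have "\<dots> = (cmod (\<Sum>v<R. \<Sum>c<\<kappa>. a v c))\<^sup>2 / R" using assms(2) by simp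
    finally show ?thesis .
  qed
  define chi :: state4 where "chi v c w d = (if w = v \<and> c = cv v \<and> d = cv v then complex_of_real (1 / sqrt (real R)) else 0)" for v c w d
  have rig: "rigid_after_CNOT R \<kappa> chi"
    unfolding rigid_after_CNOT_def chi_def using cv by blast
  define k where "k = complex_of_real (1 / sqrt (real R))"
  have inn: "inner4 R \<kappa> chi \<psi> = k * (\<Sum>v<R. a v (cv v))"
  proof -
    have "inner4 R \<kappa> chi \<psi> = (\<Sum>v<R. k * a v (cv v))"
      unfolding inner4_def
    proof (intro sum.cong refl)
      fix v assume v: "v \<in> {..<R}"
      have cvk: "cv v \<in> {..<\<kappa>}" using cv v by auto
      have "(\<Sum>c<\<kappa>. \<Sum>w<R. \<Sum>d<\<kappa>. cnj (chi v c w d) * \<psi> v c w d)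
          = (\<Sum>w<R. \<Sum>d<\<kappa>. cnj (chi v (cv v) w d) * \<psi> v (cv v) w d)"
        using v cvk by (intro sum1) (auto simp: chi_def)
      also have "\<dots> = (\<Sum>d<\<kappa>. cnj (chi v (cv v) v d) * \<psi> v (cv v) v d)"
        using v cvk by (intro sum1) (auto simp: chi_def)
      also have "\<dots> = cnj (chi v (cv v) v (cv v)) * \<psi> v (cv v) v (cv v)"
        using v cvk by (intro sum1) (auto simp: chi_def)
      also have "\<dots> = k * a v (cv v)" by (simp add: chi_def k_def a_def)
      finally show "(\<Sum>c<\<kappa>. \<Sum>w<R. \<Sum>d<\<kappa>. cnj (chi v c w d) * \<psi> v c w d) = k * a v (cv v)" .
    qed
    then show ?thesis by (simp add: sum_distrib_left)
  qed
  have inn2: "(cmod (inner4 R \<kappa> chi \<psi>))\<^sup>2 = (cmod (\<Sum>v<R. a v (cv v)))\<^sup>2 / R"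
  proof -
    have "(cmod (inner4 R \<kappa> chi \<psi>))\<^sup>2 = (cmod k)\<^sup>2 * (cmod (\<Sum>v<R. a v (cv v)))\<^sup>2"
      unfolding inn by (simp add: norm_mult power_mult_distrib)
    moreover have "(cmod k)\<^sup>2 = 1 / real R"
    proof -
      have "cmod k = 1 / sqrt (real R)" unfolding k_def norm_of_real by simp
      then show ?thesis by (simp add: power_divide)
    qed
    ultimately show ?thesis by simp
  qed
  have big: "2 * sqrt dM \<le> (real \<kappa> + 1) * sqrt ((real \<kappa> + 1) * dM)"
  proof -
    have s1: "1 \<le> sqrt (real \<kappa> + 1)" by simp
    have "2 \<le> (real \<kappa> + 1) * sqrt (real \<kappa> + 1)"
    proof -
      have "real \<kappa> + 1 \<ge> 2" using assms(2) by simp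
      moreover have "real \<kappa> + 1 \<le> (real \<kappa> + 1) * sqrt (real \<kappa> + 1)"
        using mult_left_mono[OF s1, of "real \<kappa> + 1"] by simp
      ultimately show ?thesis by linarith
    qed
    then have "2 * sqrt dM \<le> ((real \<kappa> + 1) * sqrt (real \<kappa> + 1)) * sqrt dM"
      using dM by (intro mult_right_mono) simp_all
    also have "\<dots> = (real \<kappa> + 1) * sqrt ((real \<kappa> + 1) * dM)" by (simp add: real_sqrt_mult)
    finally show ?thesis .
  qed
  show ?thesis
    using rig inn2 dens bnd2 big by (intro exI[of _ chi]) auto
qed

end
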